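(* For every integer $k\geqslant 1$, there exists a finite word $W$ over a $4$-letter alphabet with exactly $k$ distinct reducts, i.e., $r(W)=k$.
   Context: A square is a finite non-empty word of the form $XX$; a word is square-free if it has no square factor. A square reduction replaces a word $UXXV$ (with $X$ non-empty) by $UXV$. A reduct of $W$ is any square-free word obtainable from $W$ by a finite sequence of square reductions, and $r(W)$ is the number of distinct reducts of $W$. *)

theory Defs
  imports Main
begin

definition is_square :: "'a list \<Rightarrow> bool" where
  "is_square w \<longleftrightarrow> (\<exists>X. X \<noteq> [] \<and> w = X @ X)"

definition square_free :: "'a list \<Rightarrow> bool" where
  "square_free w \<longleftrightarrow> \<not> (\<exists>U X V. X \<noteq> [] \<and> w = U @ X @ X @ V)"

definition sq_step :: "'a list \<Rightarrow> 'a list \<Rightarrow> bool" where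
  "sq_step w w' \<longleftrightarrow> (\<exists>U X V. X \<noteq> [] \<and> w = U @ X @ X @ V \<and> w' = U @ X @ V)"

definition reducts :: "'a list \<Rightarrow> 'a list set" where
  "reducts W = {w. sq_step\<^sup>*\<^sup>* W w \<and> square_free w}"

definition r :: "'a list \<Rightarrow> nat" where
  "r W = card (reducts W)"

end

theory Submission
  imports Defs
begin


fun tm :: "nat \<Rightarrow> nat" where
  "tm n = (if n = 0 then 0 else if even n then tm (n div 2) else 1 - tm (n div 2))"

declare tm.simps[simp del]

lemma tm_le1: "tm n \<le> 1"
  by (induction n rule: tm.induct) (subst tm.simps, auto)

lemma tm_0[simp]: "tm 0 = 0" by (subst tm.simps) simp

lemma tm_even[simp]: "tm (2*n) = tm n"
  by (subst tm.simps) auto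

lemma tm_odd[simp]: "tm (Suc (2*n)) = 1 - tm n"
  by (subst tm.simps) auto

lemma tm_div: "tm x = (if even x then tm (x div 2) else 1 - tm (x div 2))"
proof (cases "even x")
  case True then obtain n where "x = 2*n" by blast
  then show ?thesis by simp
next
  case False then obtain n where "x = Suc (2*n)" using oddE by fastforce
  then show ?thesis by simp
qed

lemma tm_41: "tm (Suc (4*a)) = tm (Suc (Suc (4*a)))"
proof -
  have "Suc (4*a) = Suc (2*(2*a))" by simp
  moreover have "Suc (Suc (4*a)) = 2 * Suc (2*a)" by simp
  ultimately show ?thesis by (metis tm_even tm_odd)
qed

lemma tm_pair: "even x \<Longrightarrow> tm (Suc x) \<noteq> tm x"
proof -
  assume "even x" then obtain b where "x = 2*b" by blast
  moreover have "tm b \<le> 1" by (rule tm_le1)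
  ultimately show ?thesis by simp arith
qed

lemma overlap_free: "p \<ge> 1 \<Longrightarrow> \<not> (\<forall>j\<le>p. tm (i+j) = tm (i+j+p))"
proof (induction p arbitrary: i rule: less_induct)
  case (less p)
  show ?case
  proof
    assume H: "\<forall>j\<le>p. tm (i+j) = tm (i+j+p)"
    show False
    proof (cases "even p")
      case True
      then obtain q where pq: "p = 2*q" by blast
      with less.prems have q1: "q \<ge> 1" by simp
      have "\<forall>j\<le>q. tm (i div 2 + j) = tm (i div 2 + j + q)"
      proof (intro allI impI)
        fix j assume "j \<le> q"
        then have h0: "tm (i + 2*j) = tm (i + 2*j + p)" using H pq by auto
        have h1: "tm (i + 2*j) = (if even i then tm (i div 2 + j) else 1 - tm (i div 2 + j))"
          using tm_div[of "i+2*j"] by (simp add: add.commute)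
        have h2: "tm (i + 2*j + p) = (if even i then tm (i div 2 + j + q) else 1 - tm (i div 2 + j + q))"
        proof -
          have d: "(i + 2*j + p) div 2 = i div 2 + j + q" using pq by simp
          have e: "even (i + 2*j + p) = even i" using pq by simp
          show ?thesis using tm_div[of "i+2*j+p"] unfolding d e .
        qed
        show "tm (i div 2 + j) = tm (i div 2 + j + q)"
        proof (cases "even i")
          case True thus ?thesis using h0 h1 h2 by simp
        next
          case False 
          hence "1 - tm (i div 2 + j) = 1 - tm (i div 2 + j + q)" using h0 h1 h2 by simp
          thus ?thesis using tm_le1[of "i div 2 + j"] tm_le1[of "i div 2 + j + q"] by arith
        qed
      qed
      moreover have "q < p" using pq q1 by simp
      ultimately show False using less.IH[of q "i div 2"] q1 by blast
    next
      case False
      show False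
      proof (cases "p = 1")
        case True
        have e: "tm i = tm (Suc i)" "tm (Suc i) = tm (Suc (Suc i))"
          using H[rule_format, of 0] H[rule_format, of 1] True by auto
        show False
        proof (cases "even i")
          case True then show False using tm_pair[of i] e by simp
        next
          case False then have "even (Suc i)" by simp
          then show False using tm_pair[of "Suc i"] e by simp
        qed
      next
        case p1: False
        with False less.prems have p3: "p \<ge> 3" by presburger
        define a where "a = (i + 2) div 4"
        have a1: "4 * a \<le> i + 2" unfolding a_def by simp
        have a2: "i + 2 < 4 * a + 4" unfolding a_def
          using mod_less_divisor[of 4 "i+2"] div_mult_mod_eq[of "i+2" 4] by linarith
        define x where "x = Suc (4*a)"
        have x: "i \<le> x" "x < i + 4" using a1 a2 unfolding x_def by linarith+
        have xa: "x = Suc (4*a)" by (simp add: x_def)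
        have eqx: "tm x = tm (Suc x)" using tm_41[of a] xa by simp
        show False
        proof (cases "x \<le> i + p - 1")
          case True
          have "tm (x + p) = tm x" using H[rule_format, of "x - i"] True x(1) p3 by (simp add: add.commute)
          moreover have "tm (Suc x + p) = tm (Suc x)" using H[rule_format, of "Suc x - i"] True x(1) p3
            by (simp add: Suc_diff_le add.commute)
          moreover have "even (x + p)" using xa False by simp
          ultimately show False using tm_pair[of "x+p"] eqx by simp
        next
          case nT: False
          have j1: "x - p - i \<le> p" "i + (x - p - i) = x - p" "x - p + p = x" using nT x p3 by auto
          have "tm (x - p) = tm x" using H[rule_format, OF j1(1)] unfolding j1(2) j1(3) .
          moreover have j2: "Suc x - p - i \<le> p" "i + (Suc x - p - i) = Suc (x - p)" "Suc (x - p) + p = Suc x"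
            using nT x p3 by auto
          have "tm (Suc (x - p)) = tm (Suc x)" using H[rule_format, OF j2(1)] unfolding j2(2) j2(3) .
          moreover have "even (x - p)" using xa False nT by simp
          ultimately show False using tm_pair[of "x-p"] eqx by simp
        qed
      qed
    qed
  qed
qed



definition V :: "nat \<Rightarrow> nat" where "V x = tm (Suc x) + 1 - tm x"

lemma V_lt3: "V x < 3"
  using tm_le1[of x] tm_le1[of "Suc x"] unfolding V_def by linarith

lemma V_int: "int (V x) = int (tm (Suc x)) + 1 - int (tm x)"
  using tm_le1[of x] unfolding V_def by simp

lemma V_sqfree:
  assumes L: "L \<ge> 1" and H: "\<forall>j<L. V (i+j) = V (i+L+j)"
  shows False
proof -
  have C: "\<forall>j\<le>L. int (tm (i+L+j)) - int (tm (i+j)) = int (tm (i+L)) - int (tm i)"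
  proof (intro allI impI)
    fix j assume "j \<le> L"
    then show "int (tm (i+L+j)) - int (tm (i+j)) = int (tm (i+L)) - int (tm i)"
    proof (induction j)
      case 0 then show ?case by simp
    next
      case (Suc j)
      then have "j < L" by simp
      then have "V (i+j) = V (i+L+j)" using H by simp
      then have "int (V (i+j)) = int (V (i+L+j))" by simp
      then have "int (tm (Suc (i+j))) - int (tm (i+j)) = int (tm (Suc (i+L+j))) - int (tm (i+L+j))"
        unfolding V_int by simp
      then show ?case using Suc by simp
    qed
  qed
  have t1: "tm i \<le> 1" "tm (i+L) \<le> 1" by (rule tm_le1)+
  show False
  proof (cases "tm (i+L) = tm i")
    case True
    have "\<forall>j\<le>L. tm (i+j) = tm (i+j+L)"
    proof (intro allI impI)
      fix j assume "j \<le> L"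
      then have "int (tm (i+L+j)) - int (tm (i+j)) = 0" using C True by simp
      then show "tm (i+j) = tm (i+j+L)" by (simp add: ac_simps)
    qed
    then show False using overlap_free[OF L] by blast
  next
    case False
    have e1: "int (tm (i+L+L)) - int (tm (i+L)) = int (tm (i+L)) - int (tm i)" using C by simp
    have t2: "tm (i+L+L) \<le> 1" by (rule tm_le1)
    show False using e1 t1 t2 False by linarith
  qed
qed

lemma tm_shift: "j < 2^n \<Longrightarrow> tm (a * 2^n + j) = (tm a + tm j) mod 2"
proof (induction n arbitrary: j)
  case 0
  then have "j = 0" by simp
  then show ?case using tm_le1[of a] by simp
next
  case (Suc n)
  have jd: "j div 2 < 2^n" using Suc.prems by simp
  have ta: "tm a \<le> 1" "tm (j div 2) \<le> 1" by (rule tm_le1)+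
  show ?case
  proof (cases "even j")
    case True
    then obtain b where b: "j = 2*b" by blast
    have e: "a * 2 ^ Suc n + j = 2 * (a * 2^n + b)" using b by simp
    have "tm (a * 2 ^ Suc n + j) = tm (a * 2^n + b)" unfolding e by (rule tm_even)
    also have "\<dots> = (tm a + tm b) mod 2" using Suc.IH jd b by simp
    finally show ?thesis using b by simp
  next
    case False
    then obtain b where b: "j = Suc (2*b)" using oddE by fastforce
    have e: "a * 2 ^ Suc n + j = Suc (2 * (a * 2^n + b))" using b by simp
    have "tm (a * 2 ^ Suc n + j) = 1 - tm (a * 2^n + b)" unfolding e by (rule tm_odd)
    also have "\<dots> = 1 - (tm a + tm b) mod 2" using Suc.IH jd b by simp
    finally show ?thesis using b ta by (auto simp: le_Suc_eq)
  qed
qed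

lemma tm_Suc0[simp]: "tm (Suc 0) = 1"
  using tm_odd[of 0] by simp

lemma tm_1[simp]: "tm 1 = 1"
  by simp

lemma tm_pow2: "tm (2^n) = 1"
  using tm_shift[of 0 n 1] by simp

lemma tm_pow2m1: "tm (2^n - 1) = n mod 2"
proof (induction n)
  case 0 then show ?case by simp
next
  case (Suc n)
  have "(2::nat)^n \<ge> 1" by simp
  then have "2^Suc n - 1 = Suc (2 * (2^n - 1))" unfolding power_Suc by arith
  then have "tm (2^Suc n - 1) = 1 - tm (2^n - 1)" by simp
  then show ?case using Suc by presburger
qed

lemma tm_5: "tm 5 = 0"
proof -
  have "(5::nat) = Suc (2*2)" by simp
  then have "tm 5 = 1 - tm 2" by (metis tm_odd)
  also have "tm 2 = 1" using tm_even[of 1] by simp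
  finally show ?thesis by simp
qed

lemma tm_6: "tm 6 = 0"
proof -
  have "(6::nat) = 2*3" by simp
  then have "tm 6 = tm 3" by (metis tm_even)
  also have "(3::nat) = Suc (2*1)" by simp
  then have "tm 3 = 0" by (metis tm_odd tm_1 diff_self_eq_0)
  finally show ?thesis .
qed



lemma four_pow: "(4::nat)^i = 2^(2*i)"
  by (simp add: power_mult)

lemma tm_5N: "j < 4^i \<Longrightarrow> tm (5 * 4^i + j) = tm j"
  using tm_shift[of j "2*i" 5] tm_5 tm_le1[of j] by (simp add: four_pow)

lemma tm_6N: "tm (6 * 4^i) = 0"
  using tm_shift[of 0 "2*i" 6] tm_6 by (simp add: four_pow)

lemma tm_N: "tm (4^i) = 1"
  using tm_pow2[of "2*i"] by (simp add: four_pow)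

lemma tm_Nm1: "tm (4^i - 1) = 0"
  using tm_pow2m1[of "2*i"] by (simp add: four_pow)

lemma V_5N: "Suc j < 4^i \<Longrightarrow> V (5 * 4^i + j) = V j"
  unfolding V_def using tm_5N[of j i] tm_5N[of "Suc j" i] by simp

lemma V_6N: "V (6 * 4^i - 1) = 1"
proof -
  have p: "(4::nat)^i \<ge> 1" by simp
  have "(6::nat) * 4^i - 1 = 5 * 4^i + (4^i - 1)" using p by simp
  then have "tm (6 * 4^i - 1) = 0" using tm_5N[of "4^i - 1" i] tm_Nm1[of i] p by simp
  moreover have "Suc (6 * 4^i - 1) = 6 * 4^i" using p by simp
  ultimately show ?thesis unfolding V_def using tm_6N[of i] by simp
qed

lemma V_Nm1: "V (4^i - 1) = 2"
proof -
  have p: "(4::nat)^i \<ge> 1" by simp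
  then have "Suc (4^i - 1) = 4^i" by simp
  then show ?thesis unfolding V_def using tm_N[of i] tm_Nm1[of i] by simp
qed

lemma sqfree_mapV: "square_free (map V [a..<b])"
  unfolding square_free_def
proof
  assume "\<exists>U X R. X \<noteq> [] \<and> map V [a..<b] = U @ X @ X @ R"
  then obtain U X R where X: "X \<noteq> []" and e: "map V [a..<b] = U @ X @ X @ R" by blast
  define L where "L = length X"
  define i where "i = a + length U"
  have len: "b - a = length U + L + L + length R"
    using arg_cong[OF e, of length] unfolding L_def by simp
  have "\<forall>j<L. V (i+j) = V (i+L+j)"
  proof (intro allI impI)
    fix j assume j: "j < L"
    have "map V [a..<b] ! (length U + j) = X ! j" using e j unfolding L_def
      by (simp add: nth_append)
    moreover have "map V [a..<b] ! (length U + L + j) = X ! j" using e j unfolding L_def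
      by (simp add: nth_append)
    moreover have "map V [a..<b] ! (length U + j) = V (i + j)" using len j unfolding i_def
      by (subst nth_map_upt) (simp_all add: ac_simps)
    moreover have "map V [a..<b] ! (length U + L + j) = V (i + L + j)" using len j unfolding i_def
      by (subst nth_map_upt) (simp_all add: ac_simps)
    ultimately show "V (i+j) = V (i+L+j)" by simp
  qed
  moreover have "L \<ge> 1" using X unfolding L_def by (cases X) auto
  ultimately show False using V_sqfree by blast
qed

definition pref :: "nat list \<Rightarrow> nat list \<Rightarrow> bool" where "pref x y \<longleftrightarrow> (\<exists>r. y = x @ r)"
definition suf :: "nat list \<Rightarrow> nat list \<Rightarrow> bool" where "suf x y \<longleftrightarrow> (\<exists>l. y = l @ x)"

definition Yb :: "nat \<Rightarrow> nat list" where
  "Yb i = (if i = 0 then [2,1] else map V [0..<4^i - 1] @ [1])"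

definition Ab :: "nat list" where "Ab = [0]"

lemma V0: "V 0 = 2" unfolding V_def by simp
lemma tm_2: "tm (Suc (Suc 0)) = 1" using tm_even[of 1] by (simp add: numeral_2_eq_2)
lemma V1: "V 1 = 1" unfolding V_def using tm_2 by simp
lemma V2: "V 2 = 0" unfolding V_def
proof -
  have "tm 2 = 1" using tm_even[of 1] by simp
  moreover have "tm 3 = 0" using tm_odd[of 1] by (simp add: numeral_3_eq_3)
  ultimately show "tm (Suc 2) + 1 - tm 2 = 0" by (simp add: numeral_3_eq_3)
qed

lemma Ab_map: "Ab = map V [2..<3]"
  unfolding Ab_def using V2 by (simp add: upt_rec)

lemma Y0_map: "Yb 0 = map V [0..<2]"
  unfolding Yb_def using V0 V1 by (simp add: upt_rec)

lemma Y_factor: "i \<ge> 1 \<Longrightarrow> Yb i = map V [5*4^i..<6*4^i]"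
proof -
  assume i: "i \<ge> 1"
  have p: "(4::nat)^i \<ge> 1" by simp
  show ?thesis
  proof (rule nth_equalityI)
    show "length (Yb i) = length (map V [5*4^i..<6*4^i])" using i p unfolding Yb_def by simp
  next
    fix j assume "j < length (Yb i)"
    then have j: "j < 4^i" using i p unfolding Yb_def by simp
    show "Yb i ! j = map V [5*4^i..<6*4^i] ! j"
    proof (cases "j < 4^i - 1")
      case True
      then have "Yb i ! j = V j" using i unfolding Yb_def by (simp add: nth_append)
      moreover have "map V [5*4^i..<6*4^i] ! j = V (5*4^i + j)" using j by simp
      ultimately show ?thesis using V_5N[of j i] True by simp
    next
      case False
      then have jj: "j = 4^i - 1" using j by simp
      then have "Yb i ! j = 1" using i unfolding Yb_def by (simp add: nth_append)
      moreover have "map V [5*4^i..<6*4^i] ! j = V (5*4^i + j)" using j by simp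
      moreover have "5*4^i + j = 6 * 4^i - 1" using jj p by simp
      ultimately show ?thesis using V_6N[of i] by simp
    qed
  qed
qed

lemma Y_sqfree: "square_free (Yb i)"
  by (cases "i = 0") (simp_all add: Y0_map Y_factor sqfree_mapV)

lemma A_sqfree: "square_free Ab"
  unfolding Ab_map by (rule sqfree_mapV)

lemma Y_len: "length (Yb i) = (if i = 0 then 2 else 4^i)"
  unfolding Yb_def by simp

lemma Y_last: "\<exists>Q. Yb i = Q @ [1]"
  unfolding Yb_def by auto

lemma upt_split: "a \<le> b \<Longrightarrow> b \<le> c \<Longrightarrow> [a..<c] = [a..<b] @ [b..<c]"
  by (metis le_add_diff_inverse upt_add_eq_append)

lemma Y_prefQ: "1 \<le> i \<Longrightarrow> i < k \<Longrightarrow> pref (map V [0..<4^i - 1]) (Yb k)"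
proof -
  assume a: "1 \<le> i" "i < k"
  have "(4::nat)^i < 4^k" using a by simp
  then have le: "(4::nat)^i - 1 \<le> 4^k - 1" by (simp add: diff_le_mono less_imp_le)
  have "[0..<4^k - 1] = [0..<4^i - 1] @ [4^i - 1..<4^k - 1]"
    by (rule upt_split) (simp, rule le)
  then show ?thesis using a unfolding Yb_def by (simp add: pref_def) 
qed

lemma Y_prefY0: "1 \<le> k \<Longrightarrow> pref (Yb 0) (Yb k)"
proof -
  assume a: "1 \<le> k"
  have "(4::nat)^1 \<le> 4^k" using a by (rule power_increasing) simp
  then have "[0..<4^k - 1] = [0..<2] @ [2..<4^k - 1]"
    by (intro upt_split) simp_all
  then show ?thesis using a unfolding Y0_map unfolding Yb_def by (simp add: pref_def)
qed

lemma Y_not_pref: "1 \<le> i \<Longrightarrow> i < k \<Longrightarrow> \<not> pref (Yb i) (Yb k)"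
proof
  assume a: "1 \<le> i" "i < k" and p: "pref (Yb i) (Yb k)"
  have lt: "(4::nat)^i < 4^k" using a by simp
  have p1: "(4::nat)^i \<ge> 1" by simp
  have lt': "(4::nat)^i - 1 < 4^k - 1" using lt p1 by linarith
  have "Yb i ! (4^i - 1) = 1" using a unfolding Yb_def by (simp add: nth_append)
  moreover have "Yb k ! (4^i - 1) = V (4^i - 1)" using a lt' unfolding Yb_def
    by (simp add: nth_append)
  moreover have "Yb i ! (4^i - 1) = Yb k ! (4^i - 1)"
    using p Y_len[of i] a p1 by (metis pref_def nth_append diff_less less_numeral_extra(1) less_le_trans not_one_le_zero)
  ultimately show False using V_Nm1[of i] by simp
qed

lemma V_ne3[simp]: "V x \<noteq> 3" using V_lt3[of x] by simp

lemma Y_no3: "3 \<notin> set (Yb i)"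
  unfolding Yb_def by auto

lemma A_no3: "3 \<notin> set Ab" unfolding Ab_def by simp



fun splitb :: "nat list \<Rightarrow> nat list list" where
  "splitb [] = [[]]"
| "splitb (x # xs) = (if x = 3 then [] # splitb xs else (x # hd (splitb xs)) # tl (splitb xs))"

lemma splitb_ne[simp]: "splitb xs \<noteq> []"
  by (cases xs) auto

lemma splitb_append:
  "splitb (xs @ ys) = butlast (splitb xs) @ [last (splitb xs) @ hd (splitb ys)] @ tl (splitb ys)"
proof (induction xs)
  case Nil
  then show ?case by simp
next
  case (Cons x xs)
  show ?case
  proof (cases "x = 3")
    case True
    then show ?thesis using Cons by simp
  next
    case False
    obtain c cs where sx: "splitb xs = c # cs" by (cases "splitb xs") auto
    show ?thesis
    proof (cases cs)
      case Nil
      then show ?thesis using Cons False sx by simp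
    next
      case (Cons d ds)
      then show ?thesis using Cons.IH False sx by simp
    qed
  qed
qed

lemma splitb_3: "splitb (xs @ 3 # ys) = splitb xs @ splitb ys"
proof -
  have "splitb (xs @ 3 # ys) = butlast (splitb xs) @ [last (splitb xs)] @ splitb ys"
    using splitb_append[of xs "3 # ys"] by simp
  also have "\<dots> = splitb xs @ splitb ys" by simp
  finally show ?thesis .
qed

lemma splitb_free: "3 \<notin> set xs \<Longrightarrow> splitb xs = [xs]"
  by (induction xs) auto

fun joinb :: "nat list list \<Rightarrow> nat list" where
  "joinb [] = []"
| "joinb [b] = b"
| "joinb (b # c # bs) = b @ 3 # joinb (c # bs)"

lemma joinb_Cons: "bs \<noteq> [] \<Longrightarrow> joinb (b # bs) = b @ 3 # joinb bs"
  by (cases bs) auto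

lemma joinb_app: "bs1 \<noteq> [] \<Longrightarrow> bs2 \<noteq> [] \<Longrightarrow> joinb (bs1 @ bs2) = joinb bs1 @ 3 # joinb bs2"
proof (induction bs1)
  case Nil then show ?case by simp
next
  case (Cons b bs)
  then show ?case by (cases bs) (auto simp: joinb_Cons)
qed

lemma splitb_joinb: "\<forall>b\<in>set bs. 3 \<notin> set b \<Longrightarrow> bs \<noteq> [] \<Longrightarrow> splitb (joinb bs) = bs"
proof (induction bs rule: joinb.induct)
  case 1 then show ?case by simp
next
  case (2 b) then show ?case by (simp add: splitb_free)
next
  case (3 b c bs) then show ?case by (simp add: splitb_3 splitb_free)
qed

lemma joinb_consx: "joinb ((x # b) # bs) = x # joinb (b # bs)"
  by (cases bs) auto

lemma joinb_splitb: "joinb (splitb w) = w"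
proof (induction w)
  case Nil then show ?case by simp
next
  case (Cons x xs)
  show ?case
  proof (cases "x = 3")
    case True then show ?thesis using Cons by (simp add: joinb_Cons)
  next
    case False
    then have "joinb (splitb (x # xs)) = x # joinb (hd (splitb xs) # tl (splitb xs))"
      by (simp add: joinb_consx)
    also have "hd (splitb xs) # tl (splitb xs) = splitb xs" by simp
    finally show ?thesis using Cons by simp
  qed
qed

lemma joinb_hd: "bs \<noteq> [] \<Longrightarrow> \<exists>V0. joinb bs = hd bs @ V0"
  by (induction bs rule: joinb.induct) auto

lemma joinb_last: "bs \<noteq> [] \<Longrightarrow> \<exists>U0. joinb bs = U0 @ last bs"
proof (induction bs rule: joinb.induct)
  case (3 b c bs)
  then obtain U0 where "joinb (c # bs) = U0 @ last (c # bs)" by blast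
  then show ?case by (rule_tac x="b @ 3 # U0" in exI) simp
qed auto

lemma joinb_set: "set (joinb bs) \<subseteq> insert 3 (\<Union>b\<in>set bs. set b)"
  by (induction bs rule: joinb.induct) auto

definition D :: "nat list \<Rightarrow> nat list \<Rightarrow> nat list \<Rightarrow> bool" where
  "D L B R \<longleftrightarrow> (\<exists>Q P. B = Q @ P \<and> suf P L \<and> pref Q R)"

lemma stepD:
  assumes "bs1 \<noteq> []" "bs2 \<noteq> []" "D (last bs1) B (hd bs2)"
  shows "sq_step (joinb (bs1 @ [B] @ bs2)) (joinb (bs1 @ bs2))"
proof -
  obtain Q P where B: "B = Q @ P" and s: "suf P (last bs1)" and p: "pref Q (hd bs2)"
    using assms(3) unfolding D_def by blast
  obtain U0 where u: "joinb bs1 = U0 @ last bs1" using joinb_last[OF assms(1)] by blast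
  obtain V0 where v: "joinb bs2 = hd bs2 @ V0" using joinb_hd[OF assms(2)] by blast
  obtain l where l: "last bs1 = l @ P" using s unfolding suf_def by blast
  obtain r where r: "hd bs2 = Q @ r" using p unfolding pref_def by blast
  have e1: "joinb (bs1 @ [B] @ bs2) = (U0 @ l) @ (P @ 3 # Q) @ (P @ 3 # Q) @ (r @ V0)"
    using assms(1,2) u v l r B by (simp add: joinb_app joinb_Cons)
  have e2: "joinb (bs1 @ bs2) = (U0 @ l) @ (P @ 3 # Q) @ (r @ V0)"
    using assms(1,2) u v l r by (simp add: joinb_app)
  show ?thesis unfolding sq_step_def e1 e2 by blast
qed

lemma nsq_step: "sq_step w w' \<Longrightarrow> \<not> square_free w"
  unfolding sq_step_def square_free_def by blast

lemma block_factor: "3 \<notin> set Z \<Longrightarrow> \<exists>b\<in>set (splitb (U @ Z @ R)). \<exists>p s. b = p @ Z @ s"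
proof -
  assume z: "3 \<notin> set Z"
  have "splitb (Z @ R) = (Z @ hd (splitb R)) # tl (splitb R)"
    using splitb_append[of Z R] z by (simp add: splitb_free)
  then have "splitb (U @ Z @ R) = butlast (splitb U) @ [last (splitb U) @ Z @ hd (splitb R)] @ tl (splitb R)"
    using splitb_append[of U "Z @ R"] by simp
  then show ?thesis by force
qed

lemma classify:
  assumes dist: "distinct (splitb w)" and sf: "\<forall>b\<in>set (splitb w). square_free b"
    and w: "w = U @ X @ X @ R" and X: "X \<noteq> []"
  shows "\<exists>bs1 B bs2. splitb w = bs1 @ [B] @ bs2 \<and> bs1 \<noteq> [] \<and> bs2 \<noteq> [] \<and>
           D (last bs1) B (hd bs2) \<and> splitb (U @ X @ R) = bs1 @ bs2"
proof (cases "3 \<in> set X")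
  case False
  then have "3 \<notin> set (X @ X)" by simp
  from block_factor[OF this, of U R] w obtain b p s where
    b: "b \<in> set (splitb w)" "b = p @ (X @ X) @ s" by auto
  then have "\<not> square_free b" using X unfolding square_free_def by auto
  then show ?thesis using sf b by blast
next
  case True
  then obtain P R1 where X1: "X = P @ 3 # R1" and P: "3 \<notin> set P" by (meson split_list_first)
  show ?thesis
  proof (cases "3 \<in> set R1")
    case True
    then obtain M Q where R1: "R1 = M @ 3 # Q" and Q: "3 \<notin> set Q" by (meson split_list_last)
    have "w = (U @ P) @ 3 # (M @ 3 # ((Q @ P) @ 3 # (M @ 3 # (Q @ R))))"
      using w X1 R1 by simp
    then have "splitb w = splitb (U @ P) @ splitb M @ splitb (Q @ P) @ splitb M @ splitb (Q @ R)"
      by (simp only: splitb_3)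
    then have "\<not> distinct (splitb w)"
      by (cases "splitb M") auto
    then show ?thesis using dist by blast
  next
    case False
    have QP: "3 \<notin> set (R1 @ P)" using False P by simp
    have "w = (U @ P) @ 3 # ((R1 @ P) @ 3 # (R1 @ R))"
      using w X1 by simp
    then have sw: "splitb w = splitb (U @ P) @ [R1 @ P] @ splitb (R1 @ R)"
      by (simp only: splitb_3 splitb_free[OF QP] append_Cons append_Nil)
    have "U @ X @ R = (U @ P) @ 3 # (R1 @ R)" using X1 by simp
    then have sw': "splitb (U @ X @ R) = splitb (U @ P) @ splitb (R1 @ R)"
      by (simp only: splitb_3)
    have l: "last (splitb (U @ P)) = last (splitb U) @ P"
      using splitb_append[of U P] by (simp add: splitb_free[OF P])
    have h: "hd (splitb (R1 @ R)) = R1 @ hd (splitb R)"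
      using splitb_append[of R1 R] by (simp add: splitb_free[OF False])
    have "D (last (splitb (U @ P))) (R1 @ P) (hd (splitb (R1 @ R)))"
      unfolding D_def suf_def pref_def l h by blast
    then show ?thesis using sw sw' 
      by (intro exI[of _ "splitb (U @ P)"] exI[of _ "R1 @ P"] exI[of _ "splitb (R1 @ R)"]) simp
  qed
qed



definition st :: "nat list \<Rightarrow> nat list" where "st xs = joinb (Ab # map Yb xs)"

lemma Y_len_ge: "i \<ge> 1 \<Longrightarrow> length (Yb i) \<ge> 4"
proof -
  assume "i \<ge> 1"
  then have "(4::nat)^1 \<le> 4^i" by (rule power_increasing) simp
  then show ?thesis using \<open>i \<ge> 1\<close> by (simp add: Y_len)
qed

lemma Y_inj: "inj Yb"
proof (rule injI)
  fix i j assume e: "Yb i = Yb j"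
  then have l: "length (Yb i) = length (Yb j)" by simp
  show "i = j"
  proof (cases "i = 0")
    case True
    then show ?thesis using l Y_len_ge[of j] by (cases "j = 0") (auto simp: Y_len)
  next
    case False
    then show ?thesis using l Y_len_ge[of i] by (cases "j = 0") (auto simp: Y_len)
  qed
qed

lemma A_notY: "Ab \<noteq> Yb i"
proof
  assume "Ab = Yb i"
  then have "length Ab = length (Yb i)" by simp
  then show False using Y_len_ge[of i] by (cases "i = 0") (auto simp: Y_len Ab_def)
qed

lemma blocks_no3: "\<forall>b\<in>set (Ab # map Yb xs). 3 \<notin> set b"
  using Y_no3 A_no3 by auto

lemma split_st: "splitb (st xs) = Ab # map Yb xs"
  unfolding st_def by (rule splitb_joinb[OF blocks_no3]) simp

lemma dist_blocks: "distinct xs \<Longrightarrow> distinct (Ab # map Yb xs)"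
  using Y_inj A_notY by (auto simp: distinct_map inj_on_def)

lemma sf_blocks: "\<forall>b\<in>set (Ab # map Yb xs). square_free b"
  using Y_sqfree A_sqfree by auto

lemma D_Y0: "1 \<le> k \<Longrightarrow> D L (Yb 0) (Yb k)"
  unfolding D_def using Y_prefY0[of k] unfolding suf_def by (intro exI[of _ "Yb 0"] exI[of _ "[]"]) simp

lemma D_mid: "j < i \<Longrightarrow> 1 \<le> i \<Longrightarrow> i < k \<Longrightarrow> D (Yb j) (Yb i) (Yb k)"
proof -
  assume a: "j < i" "1 \<le> i" "i < k"
  obtain Q where "Yb j = Q @ [1]" using Y_last by blast
  then have s: "suf [1] (Yb j)" unfolding suf_def by blast
  have e: "Yb i = map V [0..<4^i - 1] @ [1]" using a unfolding Yb_def by simp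
  show ?thesis unfolding D_def using s Y_prefQ[OF a(2,3)] e by blast
qed

lemma D_A: "1 \<le> i \<Longrightarrow> i < k \<Longrightarrow> \<not> D Ab (Yb i) (Yb k)"
proof
  assume a: "1 \<le> i" "i < k" and d: "D Ab (Yb i) (Yb k)"
  then obtain Q P where e: "Yb i = Q @ P" and s: "suf P Ab" and p: "pref Q (Yb k)"
    unfolding D_def by blast
  obtain l where l: "[0] = l @ P" using s unfolding suf_def Ab_def by blast
  obtain Q' where q': "Yb i = Q' @ [1]" using Y_last by blast
  show False
  proof (cases P)
    case Nil
    then show False using p e Y_not_pref[OF a] by simp
  next
    case (Cons x xs)
    then have "P = [0]" using l by (cases l) auto
    then show False using e q' by simp
  qed
qed

lemma st_step:
  assumes "xs2 \<noteq> []" "D (last (Ab # map Yb xs1)) (Yb x) (Yb (hd xs2))"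
  shows "sq_step (st (xs1 @ [x] @ xs2)) (st (xs1 @ xs2))"
proof -
  have "sq_step (joinb ((Ab # map Yb xs1) @ [Yb x] @ map Yb xs2)) (joinb ((Ab # map Yb xs1) @ map Yb xs2))"
    using assms by (intro stepD) (auto simp: hd_map)
  then show ?thesis unfolding st_def by simp
qed

definition Inv :: "nat \<Rightarrow> nat list \<Rightarrow> bool" where
  "Inv m xs \<longleftrightarrow> sorted_wrt (<) xs \<and> xs \<noteq> [] \<and> last xs = m"

lemma Inv_step:
  assumes I: "Inv m xs" and s: "sq_step (st xs) w'"
  shows "\<exists>xs'. Inv m xs' \<and> w' = st xs'"
proof -
  obtain U X R where X: "X \<noteq> []" and e: "st xs = U @ X @ X @ R" and w': "w' = U @ X @ R"
    using s unfolding sq_step_def by blast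
  have dist: "distinct (splitb (st xs))" unfolding split_st
    using I unfolding Inv_def by (intro dist_blocks) (simp add: strict_sorted_iff)
  have sf: "\<forall>b\<in>set (splitb (st xs)). square_free b" unfolding split_st by (rule sf_blocks)
  obtain bs1 B bs2 where c: "splitb (st xs) = bs1 @ [B] @ bs2" "bs1 \<noteq> []" "bs2 \<noteq> []"
      "splitb (U @ X @ R) = bs1 @ bs2"
    using classify[OF dist sf e X] by blast
  obtain bs1' where b1: "bs1 = Ab # bs1'" using c(1,2) unfolding split_st by (cases bs1) auto
  have "map Yb xs = bs1' @ [B] @ bs2" using c(1) b1 unfolding split_st by simp
  then obtain xs1 xs2' where x: "xs = xs1 @ xs2'" "map Yb xs1 = bs1'" "map Yb xs2' = B # bs2"
    by (auto simp: map_eq_append_conv)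
  then obtain x xs2 where x2: "xs2' = x # xs2" "map Yb xs2 = bs2" by (cases xs2') auto
  have ne: "xs2 \<noteq> []" using x2 c(3) by auto
  have "w' = joinb (splitb w')" by (simp add: joinb_splitb)
  also have "\<dots> = joinb (bs1 @ bs2)" using c(4) w' by simp
  also have "\<dots> = st (xs1 @ xs2)" unfolding st_def using b1 x x2 by simp
  finally have "w' = st (xs1 @ xs2)" .
  moreover have "Inv m (xs1 @ xs2)"
    using I x x2 ne unfolding Inv_def by (auto simp: sorted_wrt_append)
  ultimately show ?thesis by blast
qed

lemma reach_inv:
  assumes "sq_step\<^sup>*\<^sup>* (st xs0) w" "Inv m xs0"
  shows "\<exists>xs. Inv m xs \<and> w = st xs"
  using assms
proof (induction rule: rtranclp_induct)
  case base then show ?case by blast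
next
  case (step y z)
  then obtain xs where "Inv m xs" "y = st xs" by blast
  then show ?case using Inv_step step(2) by blast
qed

lemma terminal:
  assumes I: "Inv m xs" and sf: "square_free (st xs)"
  shows "xs = [m] \<or> (\<exists>i. 1 \<le> i \<and> i < m \<and> xs = [i, m])"
proof (cases xs)
  case Nil then show ?thesis using I unfolding Inv_def by simp
next
  case (Cons x1 r1)
  show ?thesis
  proof (cases r1)
    case Nil then show ?thesis using I Cons unfolding Inv_def by simp
  next
    case (Cons x2 rest)
    have lt: "x1 < x2" using I \<open>xs = x1 # r1\<close> Cons unfolding Inv_def by simp
    show ?thesis
    proof (cases "x1 = 0")
      case True
      have "D (last (Ab # map Yb [])) (Yb x1) (Yb (hd (x2 # rest)))"
        using True lt D_Y0[of x2] by simp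
      then have "sq_step (st ([] @ [x1] @ (x2 # rest))) (st ([] @ (x2 # rest)))"
        by (intro st_step) simp_all
      then have "\<not> square_free (st xs)" using \<open>xs = x1 # r1\<close> Cons by (simp add: nsq_step)
      then show ?thesis using sf by contradiction
    next
      case x1: False
      show ?thesis
      proof (cases rest)
        case Nil
        then show ?thesis using I \<open>xs = x1 # r1\<close> Cons x1 lt unfolding Inv_def by auto
      next
        case (Cons x3 rest')
        have lt2: "x2 < x3" using I \<open>xs = x1 # r1\<close> \<open>r1 = x2 # rest\<close> Cons unfolding Inv_def by simp
        have "D (last (Ab # map Yb [x1])) (Yb x2) (Yb (hd (x3 # rest')))"
          using D_mid[of x1 x2 x3] lt lt2 by simp
        then have "sq_step (st ([x1] @ [x2] @ (x3 # rest'))) (st ([x1] @ (x3 # rest')))"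
          by (intro st_step) simp_all
        then have "\<not> square_free (st xs)" using \<open>xs = x1 # r1\<close> \<open>r1 = x2 # rest\<close> Cons by (simp add: nsq_step)
        then show ?thesis using sf by contradiction
      qed
    qed
  qed
qed

lemma three_split: "[a, b, c] = bs1 @ [B] @ bs2 \<Longrightarrow> bs1 \<noteq> [] \<Longrightarrow> bs2 \<noteq> [] \<Longrightarrow>
    bs1 = [a] \<and> B = b \<and> bs2 = [c]"
  by (cases bs1; cases bs2) (auto simp: Cons_eq_append_conv append_eq_Cons_conv)

lemma sf_target: assumes "1 \<le> i" "i < m" shows "square_free (st [i, m])"
  unfolding square_free_def
proof
  assume "\<exists>U X R. X \<noteq> [] \<and> st [i, m] = U @ X @ X @ R"
  then obtain U X R where X: "X \<noteq> []" and e: "st [i, m] = U @ X @ X @ R" by blast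
  have dist: "distinct (splitb (st [i,m]))" unfolding split_st
    using assms by (intro dist_blocks) simp
  have sf: "\<forall>b\<in>set (splitb (st [i,m])). square_free b" unfolding split_st by (rule sf_blocks)
  obtain bs1 B bs2 where c: "splitb (st [i,m]) = bs1 @ [B] @ bs2" "bs1 \<noteq> []" "bs2 \<noteq> []"
      "D (last bs1) B (hd bs2)"
    using classify[OF dist sf e X] by blast
  have "[Ab, Yb i, Yb m] = bs1 @ [B] @ bs2" using c(1) unfolding split_st by simp
  then have "bs1 = [Ab] \<and> B = Yb i \<and> bs2 = [Yb m]" using c(2,3) by (rule three_split)
  then show False using c(4) D_A[OF assms] by simp
qed

lemma sf_target1: "square_free (st [m])"
  unfolding square_free_def
proof
  assume "\<exists>U X R. X \<noteq> [] \<and> st [m] = U @ X @ X @ R"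
  then obtain U X R where X: "X \<noteq> []" and e: "st [m] = U @ X @ X @ R" by blast
  have dist: "distinct (splitb (st [m]))" unfolding split_st by (intro dist_blocks) simp
  have sf: "\<forall>b\<in>set (splitb (st [m])). square_free b" unfolding split_st by (rule sf_blocks)
  obtain bs1 B bs2 where c: "splitb (st [m]) = bs1 @ [B] @ bs2" "bs1 \<noteq> []" "bs2 \<noteq> []"
    using classify[OF dist sf e X] by blast
  have "length [Ab, Yb m] = length (bs1 @ [B] @ bs2)" using c(1) unfolding split_st by simp
  moreover have "length bs1 \<ge> 1" "length bs2 \<ge> 1" using c(2,3) by (auto simp: Suc_le_eq)
  ultimately show False by simp
qed

lemma phase1: "i < j \<Longrightarrow> j \<le> m \<Longrightarrow> sq_step\<^sup>*\<^sup>* (st (pre @ [i] @ [j..<m] @ [m])) (st (pre @ [i, m]))"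
proof (induction "m - j" arbitrary: j)
  case 0 then show ?case by simp
next
  case (Suc n)
  then have jm: "j < m" by simp
  have up: "[j..<m] = j # [Suc j..<m]" using jm by (simp add: upt_conv_Cons)
  have hd: "hd ([Suc j..<m] @ [m]) > j"
  proof (cases "Suc j < m")
    case True then show ?thesis by (simp add: upt_conv_Cons)
  next
    case False then show ?thesis using jm by simp
  qed
  have "D (last (Ab # map Yb (pre @ [i]))) (Yb j) (Yb (hd ([Suc j..<m] @ [m])))"
    using D_mid[of i j "hd ([Suc j..<m] @ [m])"] Suc.prems hd by simp
  then have "sq_step (st ((pre @ [i]) @ [j] @ ([Suc j..<m] @ [m]))) (st ((pre @ [i]) @ ([Suc j..<m] @ [m])))"
    by (intro st_step) simp_all
  then have s1: "sq_step (st (pre @ [i] @ [j..<m] @ [m])) (st (pre @ [i] @ [Suc j..<m] @ [m]))"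
    using up by simp
  have "sq_step\<^sup>*\<^sup>* (st (pre @ [i] @ [Suc j..<m] @ [m])) (st (pre @ [i, m]))"
    using Suc jm by (intro Suc.hyps) simp_all
  then show ?case using s1 by (meson converse_rtranclp_into_rtranclp)
qed

lemma phase2: "j < i \<Longrightarrow> sq_step\<^sup>*\<^sup>* (st ([0..<Suc j] @ i # rest)) (st ([0] @ i # rest))"
proof (induction j)
  case 0 then show ?case by simp
next
  case (Suc j)
  have "D (last (Ab # map Yb [0..<Suc j])) (Yb (Suc j)) (Yb (hd (i # rest)))"
    using D_mid[of j "Suc j" i] Suc.prems by simp
  then have "sq_step (st ([0..<Suc j] @ [Suc j] @ (i # rest))) (st ([0..<Suc j] @ (i # rest)))"
    by (intro st_step) simp_all
  then have "sq_step (st ([0..<Suc (Suc j)] @ i # rest)) (st ([0..<Suc j] @ i # rest))" by simp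
  then show ?case using Suc by (meson converse_rtranclp_into_rtranclp Suc_lessD)
qed

lemma phase3: "1 \<le> i \<Longrightarrow> sq_step (st (0 # i # rest)) (st (i # rest))"
  using st_step[of "i # rest" "[]" 0] D_Y0[of i] by simp

lemma reach_target: "1 \<le> i \<Longrightarrow> i < m \<Longrightarrow> sq_step\<^sup>*\<^sup>* (st [0..<Suc m]) (st [i, m])"
proof -
  assume a: "1 \<le> i" "i < m"
  have "[0..<Suc m] = [0..<i] @ [i..<Suc m]" using a by (intro upt_split) simp_all
  also have "[i..<Suc m] = i # [Suc i..<Suc m]" using a by (simp add: upt_conv_Cons)
  also have "[Suc i..<Suc m] = [Suc i..<m] @ [m]" using a by simp
  finally have "[0..<Suc m] = [0..<i] @ [i] @ [Suc i..<m] @ [m]" by simp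
  then have s1: "sq_step\<^sup>*\<^sup>* (st [0..<Suc m]) (st ([0..<i] @ [i, m]))"
    using phase1[of i "Suc i" m "[0..<i]"] a by simp
  have "[0..<i] = [0..<Suc (i - 1)]" using a by simp
  then have s2: "sq_step\<^sup>*\<^sup>* (st ([0..<i] @ [i, m])) (st ([0] @ [i, m]))"
    using phase2[of "i - 1" i "[m]"] a by simp
  have s3: "sq_step (st ([0] @ [i, m])) (st [i, m])" using phase3[of i "[m]"] a by simp
  show ?thesis using s1 s2 s3 by (meson rtranclp_trans rtranclp.rtrancl_into_rtrancl)
qed

lemma reach_target1: "1 \<le> m \<Longrightarrow> sq_step\<^sup>*\<^sup>* (st [0..<Suc m]) (st [m])"
proof -
  assume a: "1 \<le> m"
  have "[0..<Suc m] = [0..<Suc (m - 1)] @ [m]" using a by simp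
  then have s2: "sq_step\<^sup>*\<^sup>* (st [0..<Suc m]) (st ([0] @ [m]))"
    using phase2[of "m - 1" m "[]"] a by simp
  have s3: "sq_step (st ([0] @ [m])) (st [m])" using phase3[of m "[]"] a by simp
  show ?thesis using s2 s3 by (meson rtranclp.rtrancl_into_rtrancl)
qed

lemma reducts_eq:
  assumes m: "1 \<le> m"
  shows "reducts (st [0..<Suc m]) = (\<lambda>i. st [i, m]) ` {1..<m} \<union> {st [m]}"
proof
  have I0: "Inv m [0..<Suc m]" unfolding Inv_def by (simp only: sorted_wrt_upt) simp
  show "reducts (st [0..<Suc m]) \<subseteq> (\<lambda>i. st [i, m]) ` {1..<m} \<union> {st [m]}"
  proof
    fix w assume "w \<in> reducts (st [0..<Suc m])"
    then have r: "sq_step\<^sup>*\<^sup>* (st [0..<Suc m]) w" and s: "square_free w" unfolding reducts_def by auto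
    obtain xs where "Inv m xs" "w = st xs" using reach_inv[OF r I0] by blast
    then show "w \<in> (\<lambda>i. st [i, m]) ` {1..<m} \<union> {st [m]}" using terminal[of m xs] s by auto
  qed
next
  show "(\<lambda>i. st [i, m]) ` {1..<m} \<union> {st [m]} \<subseteq> reducts (st [0..<Suc m])"
    using reach_target sf_target reach_target1[OF m] sf_target1 unfolding reducts_def by auto
qed

lemma len_st2: "1 \<le> i \<Longrightarrow> length (st [i, m]) = 3 + 4^i + length (Yb m)"
  unfolding st_def by (simp add: Ab_def Y_len)

lemma len_st1: "length (st [m]) = 2 + length (Yb m)"
  unfolding st_def by (simp add: Ab_def)

lemma card_reducts:
  assumes m: "1 \<le> m"
  shows "r (st [0..<Suc m]) = m"
proof -
  have inj: "inj_on (\<lambda>i. st [i, m]) {1..<m}"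
  proof (rule inj_onI)
    fix i j assume "i \<in> {1..<m}" "j \<in> {1..<m}" "st [i, m] = st [j, m]"
    then have "(4::nat)^i = 4^j" using len_st2[of i m] len_st2[of j m] by (metis add_right_cancel add_left_cancel atLeastLessThan_iff)
    then show "i = j" by simp
  qed
  have notin: "st [m] \<notin> (\<lambda>i. st [i, m]) ` {1..<m}"
  proof
    assume "st [m] \<in> (\<lambda>i. st [i, m]) ` {1..<m}"
    then obtain i where "i \<in> {1..<m}" "st [m] = st [i, m]" by blast
    then show False using len_st2[of i m] len_st1[of m] by simp
  qed
  have "card ((\<lambda>i. st [i, m]) ` {1..<m} \<union> {st [m]}) = card ((\<lambda>i. st [i, m]) ` {1..<m}) + 1"
    using notin by simp
  also have "\<dots> = (m - 1) + 1" using card_image[OF inj] by simp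
  finally show ?thesis unfolding r_def reducts_eq[OF m] using m by simp
qed

lemma set_st: "set (st xs) \<subseteq> {0..<4}"
proof -
  have "set (st xs) \<subseteq> insert 3 (\<Union>b\<in>set (Ab # map Yb xs). set b)" unfolding st_def by (rule joinb_set)
  moreover have "\<forall>b\<in>set (Ab # map Yb xs). set b \<subseteq> {0..<3}"
    using V_lt3 by (auto simp: Ab_def Yb_def)
  ultimately show ?thesis by fastforce
qed

theorem theorem2p7:
  fixes k :: nat
  assumes "k \<ge> 1"
  shows "\<exists>W :: nat list. set W \<subseteq> {0..<4} \<and> r W = k"
  using set_st card_reducts[OF assms] by blast

end
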